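(* For real numbers $x\ge y\ge2$ we have $$ \Phi(x,y)\le\frac1{\log x}\int_1^x\frac{\Phi(t,y)}{t}\,dt+\frac1{\log x}\sum_{\substack{d\le x\\P(\varphi(d))\le y}}\Phi\left(\frac xd,y\right)\Lambda(d), $$ where the sum is over positive integers $d\le x$ with $P(\varphi(d))\le y$.
   Context: $\varphi$ is Euler's totient function and $\Lambda$ is the von Mangoldt function. $P(n)$ denotes the largest prime factor of an integer $n>1$, with $P(1)=1$. For real $t\ge1$ and $y\ge2$, $\Phi(t,y)$ denotes the number of positive integers $n\le t$ with $P(\varphi(n))\le y$. *)

theory Defs
  imports "HOL-Analysis.Analysis" "HOL-Number_Theory.Number_Theory"
begin

definition gpf :: "nat \<Rightarrow> nat" where
  "gpf n = (if n \<le> 1 then 1 else Max (prime_factors n))"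

definition mangoldt :: "nat \<Rightarrow> real" where
  "mangoldt n = (if \<exists>p k. prime p \<and> k \<ge> 1 \<and> n = p ^ k
                 then ln (real (THE p. prime p \<and> (\<exists>k\<ge>1. n = p ^ k))) else 0)"

definition Phi :: "real \<Rightarrow> real \<Rightarrow> nat" where
  "Phi t y = card {n::nat. 1 \<le> n \<and> real n \<le> t \<and> real (gpf (totient n)) \<le> y}"

end

theory Submission imports Defs begin

lemma int_piece:
  fixes a b :: real
  assumes "1 \<le> a" "a \<le> b"
  shows "((\<lambda>t. if a \<le> t then 1/t else 0) has_integral (ln b - ln a)) {1..b}"
proof -
  have "((\<lambda>t. 1/t) has_integral (ln b - ln a)) {a..b}"
  proof (rule fundamental_theorem_of_calculus[OF assms(2)])
    fix t assume "t \<in> {a..b}"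
    then have "t > 0" using assms by auto
    then have "(ln has_real_derivative 1/t) (at t within {a..b})"
      by (auto intro!: derivative_eq_intros)
    then show "(ln has_vector_derivative 1/t) (at t within {a..b})"
      by (simp add: has_real_derivative_iff_has_vector_derivative)
  qed
  then have "((\<lambda>t. if t \<in> cbox a b then 1/t else 0) has_integral (ln b - ln a)) (cbox 1 b)"
    by (intro has_integral_restrict_closed_subinterval) (use assms in auto)
  then have "((\<lambda>t. if t \<in> {a..b} then 1/t else 0) has_integral (ln b - ln a)) {1..b}"
    by (simp add: cbox_interval)
  then show ?thesis
    by (rule has_integral_eq[rotated]) auto
qed

lemma mangoldt_pp:
  assumes "prime p" "k \<ge> 1"
  shows "mangoldt (p ^ k) = ln (real p)"
proof -
  have "(THE q. prime q \<and> (\<exists>j\<ge>1. p ^ k = q ^ j)) = p"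
  proof (rule the_equality)
    show "prime p \<and> (\<exists>j\<ge>1. p ^ k = p ^ j)" using assms by auto
  next
    fix q assume "prime q \<and> (\<exists>j\<ge>1. p ^ k = q ^ j)"
    then obtain j where q: "prime q" "j \<ge> 1" "p ^ k = q ^ j" by auto
    have "q dvd p ^ k" using q by (simp add: dvd_power)
    then have "q dvd p" using q(1) prime_dvd_power by blast
    then show "q = p" using q(1) assms(1) primes_dvd_imp_eq by blast
  qed
  then show ?thesis unfolding mangoldt_def using assms by auto
qed

lemma mangoldt_nonneg: "mangoldt d \<ge> 0"
proof (cases "\<exists>p k. prime p \<and> k \<ge> 1 \<and> d = p ^ k")
  case True
  then obtain p k where "prime p" "k \<ge> 1" "d = p ^ k" by auto
  then show ?thesis using mangoldt_pp[of p k] prime_gt_1_nat[of p] by (simp add: ln_ge_zero)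
next
  case False
  then show ?thesis unfolding mangoldt_def by auto
qed

lemma ln_mangoldt_sum:
  assumes "n > 0"
  shows "ln (real n) = (\<Sum>d\<in>{d. d dvd n}. mangoldt d)"
proof -
  define A where "A = Sigma (prime_factors n) (\<lambda>p. {1..multiplicity p n})"
  define g where "g = (\<lambda>(p::nat,k::nat). p ^ k)"
  have finA: "finite A" unfolding A_def by auto
  have inj: "inj_on g A"
  proof (rule inj_onI)
    fix u v assume u: "u \<in> A" and v: "v \<in> A" and e: "g u = g v"
    obtain p k where pk: "u = (p,k)" by (cases u)
    obtain q j where qj: "v = (q,j)" by (cases v)
    have pp: "prime p" "k \<ge> 1" using u pk A_def by auto
    have qp: "prime q" "j \<ge> 1" using v qj A_def by auto
    have e2: "p ^ k = q ^ j" using e pk qj g_def by auto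
    have "p dvd p ^ k" using pp by (simp add: dvd_power)
    then have "p dvd q ^ j" using e2 by simp
    then have "p = q" using pp qp prime_dvd_power primes_dvd_imp_eq by blast
    moreover then have "k = j" using e2 pp prime_gt_1_nat power_inject_exp by metis
    ultimately show "u = v" using pk qj by auto
  qed
  have sub: "g ` A \<subseteq> {d. d dvd n}"
  proof
    fix d assume "d \<in> g ` A"
    then obtain p k where "p \<in> prime_factors n" "k \<le> multiplicity p n" "d = p ^ k"
      unfolding A_def g_def by auto
    then show "d \<in> {d. d dvd n}" by (auto intro: multiplicity_dvd')
  qed
  have zero: "mangoldt d = 0" if "d \<in> {d. d dvd n} - g ` A" for d
  proof (rule ccontr)
    assume "mangoldt d \<noteq> 0"
    then obtain p k where pk: "prime p" "k \<ge> 1" "d = p ^ k"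
      unfolding mangoldt_def by (auto split: if_splits)
    have dv: "p ^ k dvd n" using that pk by auto
    have "p dvd p ^ k" using pk by (simp add: dvd_power)
    then have "p dvd n" using dv by (rule dvd_trans)
    then have pf: "p \<in> prime_factors n" using pk assms by (auto simp: in_prime_factors_iff)
    have "k \<le> multiplicity p n" using dv pk assms by (intro multiplicity_geI) auto
    then have "d \<in> g ` A" using pk pf unfolding A_def g_def by force
    then show False using that by auto
  qed
  have fin: "finite {d. d dvd n}" using assms by auto
  have "(\<Sum>d\<in>{d. d dvd n}. mangoldt d) = (\<Sum>d\<in>g ` A. mangoldt d)"
    by (rule sum.mono_neutral_right[OF fin sub]) (use zero in blast)
  also have "\<dots> = (\<Sum>u\<in>A. mangoldt (g u))" by (rule sum.reindex[OF inj, unfolded comp_def])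
  also have "\<dots> = (\<Sum>u\<in>A. ln (real (fst u)))"
    by (intro sum.cong refl) (auto simp: A_def g_def in_prime_factors_iff intro!: mangoldt_pp)
  also have "\<dots> = (\<Sum>p\<in>prime_factors n. \<Sum>k\<in>{1..multiplicity p n}. ln (real p))"
    unfolding A_def by (subst sum.Sigma) (auto simp: case_prod_beta)
  also have "\<dots> = (\<Sum>p\<in>prime_factors n. real (multiplicity p n) * ln (real p))" by simp
  also have "\<dots> = (\<Sum>p\<in>prime_factors n. ln (real (p ^ multiplicity p n)))"
    by (intro sum.cong refl) (simp add: ln_realpow)
  also have "\<dots> = ln (\<Prod>p\<in>prime_factors n. real (p ^ multiplicity p n))"
    by (subst ln_prod) (auto simp: prime_gt_0_nat in_prime_factors_iff)
  also have "\<dots> = ln (real n)"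
    using prime_factorization_nat[OF assms] by (metis of_nat_prod)
  finally show ?thesis ..
qed

lemma pf_ne: "n > (1::nat) \<Longrightarrow> prime_factors n \<noteq> {}"
proof -
  assume n: "n > 1"
  then obtain p where p: "prime p" "p dvd n" using prime_factor_nat[of n] by auto
  then have "p \<in> prime_factors n" using n by (simp add: in_prime_factors_iff)
  then show ?thesis by blast
qed

lemma gpf_ge1: "gpf n \<ge> 1"
proof (cases "n \<le> 1")
  case False
  then have "prime_factors n \<noteq> {}" by (intro pf_ne) simp
  then obtain p where p: "p \<in> prime_factors n" by blast
  then have "p \<le> Max (prime_factors n)" by (intro Max_ge) simp_all
  moreover have "p \<ge> 1" using p prime_ge_1_nat by (simp add: in_prime_factors_iff)
  ultimately have "1 \<le> Max (prime_factors n)" by linarith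
  then show ?thesis using False by (simp add: gpf_def)
next
  case True then show ?thesis by (simp add: gpf_def)
qed

lemma gpf_mono:
  assumes "a dvd b" "b > 0"
  shows "gpf a \<le> gpf b"
proof (cases "a \<le> 1")
  case True
  then have "gpf a = 1" by (simp add: gpf_def)
  then show ?thesis using gpf_ge1[of b] by linarith
next
  case False
  have "a \<le> b" using assms by (intro dvd_imp_le) simp_all
  then have b1: "\<not> b \<le> 1" using False by linarith
  have sub: "prime_factors a \<subseteq> prime_factors b" using assms by (intro dvd_prime_factors) simp_all
  have ne: "prime_factors a \<noteq> {}" using False by (intro pf_ne) simp
  have "Max (prime_factors a) \<le> Max (prime_factors b)"
    by (rule Max_mono[OF sub ne]) simp
  then show ?thesis using False b1 by (simp add: gpf_def)
qed

theorem lemma3p1: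
  fixes x y :: real
  assumes "2 \<le> y" and "y \<le> x"
  shows "real (Phi x y) \<le>
           (1 / ln x) * integral {1..x} (\<lambda>t. real (Phi t y) / t)
         + (1 / ln x) * (\<Sum>d \<in> {d::nat. 1 \<le> d \<and> real d \<le> x \<and> real (gpf (totient d)) \<le> y}.
                            real (Phi (x / real d) y) * mangoldt d)"
proof -
  define P where "P = (\<lambda>n::nat. real (gpf (totient n)) \<le> y)"
  define T where "T = (\<lambda>t::real. {n::nat. 1 \<le> n \<and> real n \<le> t \<and> P n})"
  define S where "S = T x"
  have PhiT: "\<And>t. Phi t y = card (T t)" by (simp add: Phi_def T_def P_def)
  have finT: "finite (T t)" for t
  proof -
    have "T t \<subseteq> {..nat \<lfloor>t\<rfloor>}" unfolding T_def by (auto intro: le_nat_floor)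
    then show ?thesis by (rule finite_subset) auto
  qed
  have finS: "finite S" unfolding S_def by (rule finT)
  have Seq: "{d::nat. 1 \<le> d \<and> real d \<le> x \<and> real (gpf (totient d)) \<le> y} = S"
    by (simp add: S_def T_def P_def)
  have lnx: "ln x > 0" using assms by auto
  have int: "((\<lambda>t. real (Phi t y) / t) has_integral (\<Sum>n\<in>S. ln x - ln (real n))) {1..x}"
  proof -
    have "((\<lambda>t. \<Sum>n\<in>S. if real n \<le> t then 1/t else 0) has_integral (\<Sum>n\<in>S. ln x - ln (real n))) {1..x}"
      by (rule has_integral_sum[OF finS]) (rule int_piece, auto simp: S_def T_def)
    then show ?thesis
    proof (rule has_integral_eq[rotated])
      fix t assume t: "t \<in> {1..x}"
      have e: "{n\<in>S. real n \<le> t} = T t" using t by (auto simp: T_def S_def)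
      have "(\<Sum>n\<in>S. if real n \<le> t then 1/t else 0) = (\<Sum>n\<in>{n\<in>S. real n \<le> t}. 1/t)"
        by (simp only: sum.inter_filter[OF finS, symmetric])
      also have "\<dots> = real (card (T t)) / t" using e by simp
      finally show "(\<Sum>n\<in>S. if real n \<le> t then 1/t else 0) = real (Phi t y) / t" using PhiT by simp
    qed
  qed
  then have I: "integral {1..x} (\<lambda>t. real (Phi t y) / t) = (\<Sum>n\<in>S. ln x - ln (real n))"
    by (rule integral_unique)
  have dvdS: "d \<in> S" if n: "n \<in> S" and dn: "d dvd n" for n d
  proof -
    have n1: "n \<ge> 1" "real n \<le> x" "P n" using n by (auto simp: S_def T_def)
    have "d > 0" using n1 dn by (metis dvd_0_left_iff not_one_le_zero neq0_conv)
    moreover have "d \<le> n" using n1 dn by (intro dvd_imp_le) auto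
    moreover have "gpf (totient d) \<le> gpf (totient n)"
      using n1 dn by (intro gpf_mono totient_dvd) auto
    ultimately show ?thesis using n1 unfolding S_def T_def P_def by auto
  qed
  have key: "(\<Sum>n\<in>S. ln (real n)) \<le> (\<Sum>d\<in>S. real (Phi (x / real d) y) * mangoldt d)"
  proof -
    have "(\<Sum>n\<in>S. ln (real n)) = (\<Sum>n\<in>S. \<Sum>d\<in>S. if d dvd n then mangoldt d else 0)"
    proof (rule sum.cong[OF refl])
      fix n assume n: "n \<in> S"
      have e: "{d\<in>S. d dvd n} = {d. d dvd n}" using dvdS n by auto
      have "(\<Sum>d\<in>S. if d dvd n then mangoldt d else 0) = (\<Sum>d\<in>{d\<in>S. d dvd n}. mangoldt d)"
        by (simp add: sum.inter_filter[OF finS])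
      also have "\<dots> = ln (real n)" unfolding e using n
        by (intro ln_mangoldt_sum[symmetric]) (auto simp: S_def T_def)
      finally show "ln (real n) = (\<Sum>d\<in>S. if d dvd n then mangoldt d else 0)" ..
    qed
    also have "\<dots> = (\<Sum>d\<in>S. \<Sum>n\<in>S. if d dvd n then mangoldt d else 0)" by (rule sum.swap)
    also have "\<dots> = (\<Sum>d\<in>S. real (card {n\<in>S. d dvd n}) * mangoldt d)"
      by (intro sum.cong refl) (simp add: sum.inter_filter[OF finS, symmetric])
    also have "\<dots> \<le> (\<Sum>d\<in>S. real (Phi (x / real d) y) * mangoldt d)"
    proof (rule sum_mono)
      fix d assume d: "d \<in> S"
      have d0: "d > 0" using d by (auto simp: S_def T_def)
      have "card {n\<in>S. d dvd n} \<le> card (T (x / real d))"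
      proof (rule card_inj_on_le[where f = "\<lambda>n. n div d"])
        show "inj_on (\<lambda>n. n div d) {n\<in>S. d dvd n}"
          using d0 by (auto simp: inj_on_def elim!: dvdE)
        show "(\<lambda>n. n div d) ` {n\<in>S. d dvd n} \<subseteq> T (x / real d)"
        proof
          fix m assume "m \<in> (\<lambda>n. n div d) ` {n\<in>S. d dvd n}"
          then obtain n where n: "n \<in> S" "d dvd n" "m = n div d" by auto
          then obtain k where k: "n = d * k" by (auto elim: dvdE)
          have mk: "m = k" using n k d0 by simp
          have n1: "n \<ge> 1" "real n \<le> x" "P n" using n by (auto simp: S_def T_def)
          have k1: "k \<ge> 1" using n1 k by (cases k) auto
          have "real d * real k \<le> x" using n1 k by simp
          then have kx: "real k \<le> x / real d" using d0 by (simp add: pos_le_divide_eq mult.commute)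
          have "gpf (totient k) \<le> gpf (totient n)"
            using n1 k by (intro gpf_mono totient_dvd) auto
          then have "P k" using n1 unfolding P_def by linarith
          then show "m \<in> T (x / real d)" using mk k1 kx unfolding T_def by auto
        qed
      qed (rule finT)
      then show "real (card {n\<in>S. d dvd n}) * mangoldt d \<le> real (Phi (x / real d) y) * mangoldt d"
        using PhiT mangoldt_nonneg[of d] by (simp add: mult_right_mono)
    qed
    finally show ?thesis .
  qed
  have "real (Phi x y) * ln x = (\<Sum>n\<in>S. ln x)" using PhiT S_def by simp
  also have "\<dots> = (\<Sum>n\<in>S. ln x - ln (real n)) + (\<Sum>n\<in>S. ln (real n))"
    by (simp add: sum_subtractf)
  also have "\<dots> \<le> integral {1..x} (\<lambda>t. real (Phi t y) / t) + (\<Sum>d\<in>S. real (Phi (x / real d) y) * mangoldt d)"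
    using I key by simp
  finally have "real (Phi x y) \<le> (integral {1..x} (\<lambda>t. real (Phi t y) / t) + (\<Sum>d\<in>S. real (Phi (x / real d) y) * mangoldt d)) / ln x"
    using lnx by (simp add: pos_le_divide_eq)
  then show ?thesis unfolding Seq by (simp add: add_divide_distrib)
qed

end
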